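(* Let $q$ be a power of an odd prime $p$, let $a,b\in\mathbb{F}_q$ with $b\ne0$, and let $n\ge2$ be an integer. Let $r\ge0$ be such that $p^r$ divides $n+1$ but $p^{r+1}$ does not, and let $m\ge0$ be defined by $n+1=p^r(m+1)$. Assume $r\ge1$. Let $\mu\in\mathbb{F}_{q^2}$ with $\mu^2=-1$. If $m>0$, then $\hat C_n(a,b)$ is LCD if and only if $$a/b\notin\{-\mu/b+2,\,-\mu/b-2,\,\mu/b+2,\,\mu/b-2\}\cup\{-\mu/b+\theta^i+\theta^{-i}:1\le i\le m\}\cup\{\mu/b+\theta^i+\theta^{-i}:1\le i\le m\},$$ where $\theta\in\overline{\mathbb{F}}_q$ is a primitive $2(m+1)$-th root of unity. If $m=0$, then $\hat C_n(a,b)$ is LCD if and only if $a/b\notin\{-\mu/b+2,\,-\mu/b-2,\,\mu/b+2,\,\mu/b-2\}$.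
   Context: For $a,b\in\mathbb{F}_q$ and $n\ge 2$, $\hat T_n(a,b)$ denotes the $n\times n$ symmetric tridiagonal Toeplitz matrix over $\mathbb{F}_q$ with all diagonal entries equal to $a$, all entries on the first super- and sub-diagonals equal to $b$, and all other entries $0$. $\hat C_n(a,b)$ is the $[2n,n]$ linear code over $\mathbb{F}_q$ with generator matrix $[I_n\mid \hat T_n(a,b)]$. A linear code $C$ is LCD if $C\cap C^\perp=\{0\}$ (Euclidean dual). *)

theory Defs
  imports "Jordan_Normal_Form.Matrix"
begin

definition tridiag_toeplitz :: "nat \<Rightarrow> 'a::field \<Rightarrow> 'a \<Rightarrow> 'a mat" where
  "tridiag_toeplitz n a b = mat n n (\<lambda>(i,j). if i = j then a else if i = j + 1 \<or> j = i + 1 then b else 0)"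

definition gen_matrix :: "nat \<Rightarrow> 'a::field \<Rightarrow> 'a \<Rightarrow> 'a mat" where
  "gen_matrix n a b = mat n (2 * n)
     (\<lambda>(i,j). if j < n then (if i = j then 1 else 0) else tridiag_toeplitz n a b $$ (i, j - n))"

definition lin_code :: "'a::field mat \<Rightarrow> 'a vec set" where
  "lin_code G = {transpose_mat G *\<^sub>v x | x. x \<in> carrier_vec (dim_row G)}"

definition dual_code :: "nat \<Rightarrow> 'a::field vec set \<Rightarrow> 'a vec set" where
  "dual_code len C = {y \<in> carrier_vec len. \<forall>c\<in>C. c \<bullet> y = 0}"

definition is_LCD :: "nat \<Rightarrow> 'a::field vec set \<Rightarrow> bool" where
  "is_LCD len C \<longleftrightarrow> C \<inter> dual_code len C = {0\<^sub>v len}"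

definition hatC :: "nat \<Rightarrow> 'a::field \<Rightarrow> 'a \<Rightarrow> 'a vec set" where
  "hatC n a b = lin_code (gen_matrix n a b)"

definition primitive_root_of_unity :: "nat \<Rightarrow> 'a::field \<Rightarrow> bool" where
  "primitive_root_of_unity k \<theta> \<longleftrightarrow> 0 < k \<and> \<theta> ^ k = 1 \<and> (\<forall>j. 0 < j \<and> j < k \<longrightarrow> \<theta> ^ j \<noteq> 1)"

definition field_embedding :: "('a::field \<Rightarrow> 'b::field) \<Rightarrow> bool" where
  "field_embedding f \<longleftrightarrow> inj f \<and> f 1 = 1 \<and> (\<forall>x y. f (x + y) = f x + f y) \<and> (\<forall>x y. f (x * y) = f x * f y)"

end

theory Submission
  imports Defs "Jordan_Normal_Form.Determinant" "HOL-Number_Theory.Cong"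
begin

lemma gen_carrier: "gen_matrix n a b \<in> carrier_mat n (2*n)"
  by (simp add: gen_matrix_def)

lemma tri_carrier: "tridiag_toeplitz n a b \<in> carrier_mat n n"
  by (simp add: tridiag_toeplitz_def)

lemma tri_sym: "i < n \<Longrightarrow> j < n \<Longrightarrow> tridiag_toeplitz n a b $$ (i,j) = tridiag_toeplitz n a b $$ (j,i)"
  by (auto simp: tridiag_toeplitz_def)

lemma genT_idx:
  assumes x: "x \<in> carrier_vec n" and i: "i < n"
  shows "(transpose_mat (gen_matrix n a b) *\<^sub>v x) $ i = x $ i"
proof -
  have "(transpose_mat (gen_matrix n a b) *\<^sub>v x) $ i = (\<Sum>k<n. (if k = i then 1 else 0) * x $ k)"
    using x i by (simp add: gen_matrix_def scalar_prod_def lessThan_atLeast0)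
  also have "\<dots> = (\<Sum>k<n. if k = i then x $ k else 0)" by (intro sum.cong) auto
  also have "\<dots> = x $ i" using i by simp
  finally show ?thesis .
qed

lemma GGT: "gen_matrix n a b * transpose_mat (gen_matrix n a b) =
   1\<^sub>m n + tridiag_toeplitz n a b * tridiag_toeplitz n a b"
proof (rule eq_matI)
  let ?G = "gen_matrix n a b" and ?T = "tridiag_toeplitz n a b"
  fix i j assume i: "i < dim_row (1\<^sub>m n + ?T * ?T)" and j: "j < dim_col (1\<^sub>m n + ?T * ?T)"
  hence i: "i < n" and j: "j < n" by (auto simp: tridiag_toeplitz_def)
  have "(?G * transpose_mat ?G) $$ (i,j) = (\<Sum>k\<in>{0..<2*n}. ?G $$ (i,k) * ?G $$ (j,k))"
    using i j by (simp add: scalar_prod_def gen_matrix_def)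
  also have "{0..<2*n} = {0..<n} \<union> {n..<2*n}" by auto
  also have "(\<Sum>k\<in>{0..<n} \<union> {n..<2*n}. ?G $$ (i,k) * ?G $$ (j,k)) =
     (\<Sum>k\<in>{0..<n}. ?G $$ (i,k) * ?G $$ (j,k)) + (\<Sum>k\<in>{n..<2*n}. ?G $$ (i,k) * ?G $$ (j,k))"
    by (rule sum.union_disjoint) auto
  also have "(\<Sum>k\<in>{0..<n}. ?G $$ (i,k) * ?G $$ (j,k)) = (\<Sum>k\<in>{0..<n}. (if k = i then 1 else 0) * (if j = k then 1 else 0))"
    using i j by (intro sum.cong) (auto simp: gen_matrix_def)
  also have "\<dots> = (\<Sum>k\<in>{0..<n}. if k = i then (if j = i then 1 else 0) else 0)" by (intro sum.cong) auto
  also have "\<dots> = (if i = j then 1 else 0)" using i by simp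
  also have "(\<Sum>k\<in>{n..<2*n}. ?G $$ (i,k) * ?G $$ (j,k)) = (\<Sum>k\<in>{0..<n}. ?G $$ (i,k+n) * ?G $$ (j,k+n))"
    by (rule sum.reindex_bij_witness[of _ "\<lambda>k. k + n" "\<lambda>k. k - n"]) auto
  also have "\<dots> = (\<Sum>k\<in>{0..<n}. ?T $$ (i,k) * ?T $$ (k,j))"
    using i j by (intro sum.cong refl) (auto simp: gen_matrix_def tridiag_toeplitz_def)
  also have "(if i = j then 1 else 0) + \<dots> = (1\<^sub>m n + ?T * ?T) $$ (i,j)"
    using i j by (simp add: tridiag_toeplitz_def scalar_prod_def)
  finally show "(?G * transpose_mat ?G) $$ (i,j) = (1\<^sub>m n + ?T * ?T) $$ (i,j)" .
qed (auto simp: gen_matrix_def tridiag_toeplitz_def)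

lemma LCD_iff_kernel:
  fixes a b :: "'a::field"
  shows "is_LCD (2*n) (hatC n a b) \<longleftrightarrow>
    (\<forall>x\<in>carrier_vec n. (1\<^sub>m n + tridiag_toeplitz n a b * tridiag_toeplitz n a b) *\<^sub>v x = 0\<^sub>v n \<longrightarrow> x = 0\<^sub>v n)"
proof -
  let ?G = "gen_matrix n a b" and ?T = "tridiag_toeplitz n a b"
  let ?M = "1\<^sub>m n + ?T * ?T"
  let ?K = "\<lambda>x. transpose_mat ?G *\<^sub>v x"
  have G: "?G \<in> carrier_mat n (2*n)" by (rule gen_carrier)
  have Mcar: "?M \<in> carrier_mat n n" using tri_carrier[of n a b] by auto
  have Kc: "?K x \<in> carrier_vec (2*n)" for x using G by (intro carrier_vecI) simp
  have K0: "x = 0\<^sub>v n" if "x \<in> carrier_vec n" "?K x = 0\<^sub>v (2*n)" for x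
  proof (rule eq_vecI)
    fix i assume "i < dim_vec (0\<^sub>v n)"
    hence i: "i < n" by simp
    have "x $ i = ?K x $ i" using genT_idx[OF that(1) i] by simp
    also have "\<dots> = 0" using that(2) i by simp
    finally show "x $ i = 0\<^sub>v n $ i" using i by simp
  qed (use that in auto)
  have KK0: "?K (0\<^sub>v n) = 0\<^sub>v (2*n)" using G by (intro eq_vecI) (auto simp: scalar_prod_def)
  have C: "hatC n a b = {?K x | x. x \<in> carrier_vec n}"
    unfolding hatC_def lin_code_def using G by auto
  have dual: "?K x \<in> dual_code (2*n) (hatC n a b) \<longleftrightarrow> ?M *\<^sub>v x = 0\<^sub>v n"
    if x: "x \<in> carrier_vec n" for x
  proof -
    have eq: "?K y \<bullet> ?K x = y \<bullet> (?M *\<^sub>v x)" if y: "y \<in> carrier_vec n" for y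
    proof -
      have "?K y \<bullet> ?K x = y \<bullet> (?G *\<^sub>v ?K x)"
        by (rule transpose_vec_mult_scalar[OF G Kc y])
      also have "?G *\<^sub>v ?K x = (?G * transpose_mat ?G) *\<^sub>v x"
        using G x by (simp add: assoc_mult_mat_vec)
      finally show ?thesis by (simp add: GGT)
    qed
    have Mc: "?M *\<^sub>v x \<in> carrier_vec n" using Mcar x by auto
    have "?K x \<in> dual_code (2*n) (hatC n a b) \<longleftrightarrow> (\<forall>y\<in>carrier_vec n. y \<bullet> (?M *\<^sub>v x) = 0)"
      (is "?A \<longleftrightarrow> ?B")
    proof -
      have "?A \<longleftrightarrow> (\<forall>y\<in>carrier_vec n. ?K y \<bullet> ?K x = 0)"
        unfolding dual_code_def C using Kc[of x] by blast
      also have "\<dots> \<longleftrightarrow> ?B" using eq by (simp cong: ball_cong)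
      finally show ?thesis .
    qed
    also have "\<dots> \<longleftrightarrow> ?M *\<^sub>v x = 0\<^sub>v n"
    proof
      assume h: "\<forall>y\<in>carrier_vec n. y \<bullet> (?M *\<^sub>v x) = 0"
      show "?M *\<^sub>v x = 0\<^sub>v n"
      proof (rule eq_vecI)
        fix i assume "i < dim_vec (0\<^sub>v n)" hence i: "i < n" by simp
        have "unit_vec n i \<bullet> (?M *\<^sub>v x) = 0" using h by auto
        thus "(?M *\<^sub>v x) $ i = 0\<^sub>v n $ i" using i Mc by simp
      qed (use Mc in \<open>auto simp: tridiag_toeplitz_def\<close>)
    next
      assume "?M *\<^sub>v x = 0\<^sub>v n" thus "\<forall>y\<in>carrier_vec n. y \<bullet> (?M *\<^sub>v x) = 0" by auto
    qed
    finally show ?thesis .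
  qed
  show ?thesis
  proof
    assume L: "is_LCD (2*n) (hatC n a b)"
    show "\<forall>x\<in>carrier_vec n. ?M *\<^sub>v x = 0\<^sub>v n \<longrightarrow> x = 0\<^sub>v n"
    proof (intro ballI impI)
      fix x assume x: "x \<in> carrier_vec n" and Mx: "?M *\<^sub>v x = 0\<^sub>v n"
      have "?K x \<in> hatC n a b \<inter> dual_code (2*n) (hatC n a b)"
        using C x dual[OF x] Mx by auto
      hence "?K x = 0\<^sub>v (2*n)" using L unfolding is_LCD_def by auto
      thus "x = 0\<^sub>v n" using K0 x by auto
    qed
  next
    assume R: "\<forall>x\<in>carrier_vec n. ?M *\<^sub>v x = 0\<^sub>v n \<longrightarrow> x = 0\<^sub>v n"
    show "is_LCD (2*n) (hatC n a b)" unfolding is_LCD_def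
    proof
      show "hatC n a b \<inter> dual_code (2*n) (hatC n a b) \<subseteq> {0\<^sub>v (2*n)}"
      proof
        fix c assume c: "c \<in> hatC n a b \<inter> dual_code (2*n) (hatC n a b)"
        then obtain x where x: "x \<in> carrier_vec n" and cx: "c = ?K x" using C by auto
        have "?M *\<^sub>v x = 0\<^sub>v n" using dual[OF x] c cx by auto
        hence "x = 0\<^sub>v n" using R x by auto
        thus "c \<in> {0\<^sub>v (2*n)}" using cx KK0 by simp
      qed
      have "0\<^sub>v (2*n) = ?K (0\<^sub>v n) \<and> 0\<^sub>v n \<in> carrier_vec n" using KK0 by simp
      hence "0\<^sub>v (2*n) \<in> hatC n a b" unfolding C by blast
      moreover have "?M *\<^sub>v 0\<^sub>v n = 0\<^sub>v n" by (intro eq_vecI) (use carrier_matD[OF Mcar] in \<open>auto simp: scalar_prod_def\<close>)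
      ultimately show "{0\<^sub>v (2*n)} \<subseteq> hatC n a b \<inter> dual_code (2*n) (hatC n a b)"
        using dual[of "0\<^sub>v n"] KK0 by auto
    qed
  qed
qed

lemma kernel_iff_eig:
  fixes T :: "'b::field mat"
  assumes T: "T \<in> carrier_mat n n" and mu: "\<mu>^2 = -1"
  shows "(\<exists>v. v \<in> carrier_vec n \<and> v \<noteq> 0\<^sub>v n \<and> (1\<^sub>m n + T * T) *\<^sub>v v = 0\<^sub>v n) \<longleftrightarrow>
         (\<exists>ev\<in>{\<mu>, -\<mu>}. \<exists>w. w \<in> carrier_vec n \<and> w \<noteq> 0\<^sub>v n \<and> T *\<^sub>v w = ev \<cdot>\<^sub>v w)"
proof -
  have Mv: "(1\<^sub>m n + T * T) *\<^sub>v v = v + T *\<^sub>v (T *\<^sub>v v)" if v: "v \<in> carrier_vec n" for v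
  proof -
    have "(1\<^sub>m n + T * T) *\<^sub>v v = 1\<^sub>m n *\<^sub>v v + (T * T) *\<^sub>v v"
      using T v by (intro add_mult_distrib_mat_vec) auto
    also have "\<dots> = v + T *\<^sub>v (T *\<^sub>v v)" using T v by simp
    finally show ?thesis .
  qed
  have Tc: "T *\<^sub>v v \<in> carrier_vec n" for v using T by (intro carrier_vecI) simp
  show ?thesis
  proof
    assume "\<exists>v. v \<in> carrier_vec n \<and> v \<noteq> 0\<^sub>v n \<and> (1\<^sub>m n + T * T) *\<^sub>v v = 0\<^sub>v n"
    then obtain v where v: "v \<in> carrier_vec n" and v0: "v \<noteq> 0\<^sub>v n" and Mv0: "(1\<^sub>m n + T * T) *\<^sub>v v = 0\<^sub>v n"
      by blast
    define u where "u = T *\<^sub>v v"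
    have u: "u \<in> carrier_vec n" unfolding u_def by (rule Tc)
    have Tu: "(T *\<^sub>v u) $ i = - (v $ i)" if i: "i < n" for i
    proof -
      have "(v + T *\<^sub>v u) $ i = 0" using Mv0 Mv[OF v] i unfolding u_def by simp
      moreover have "(v + T *\<^sub>v u) $ i = v $ i + (T *\<^sub>v u) $ i"
        using i carrier_vecD[OF Tc[of u]] by simp
      ultimately show ?thesis by (simp add: eq_neg_iff_add_eq_0 add.commute)
    qed
    define w where "w = u + \<mu> \<cdot>\<^sub>v v"
    have w: "w \<in> carrier_vec n" unfolding w_def using u v by simp
    show "\<exists>ev\<in>{\<mu>, -\<mu>}. \<exists>w. w \<in> carrier_vec n \<and> w \<noteq> 0\<^sub>v n \<and> T *\<^sub>v w = ev \<cdot>\<^sub>v w"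
    proof (cases "w = 0\<^sub>v n")
      case True
      have "T *\<^sub>v v = (-\<mu>) \<cdot>\<^sub>v v"
      proof (rule eq_vecI)
        fix i assume "i < dim_vec ((-\<mu>) \<cdot>\<^sub>v v)"
        hence i: "i < n" using v by simp
        have "w $ i = 0" using True i by simp
        hence "u $ i + \<mu> * v $ i = 0" unfolding w_def using i u v by simp
        thus "(T *\<^sub>v v) $ i = ((-\<mu>) \<cdot>\<^sub>v v) $ i" using i v unfolding u_def
          by (simp add: eq_neg_iff_add_eq_0)
      qed (use T v in simp)
      thus ?thesis using v v0 by blast
    next
      case False
      have "T *\<^sub>v w = \<mu> \<cdot>\<^sub>v w"
      proof (rule eq_vecI)
        fix i assume "i < dim_vec (\<mu> \<cdot>\<^sub>v w)"
        hence i: "i < n" using w by simp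
        have "T *\<^sub>v w = T *\<^sub>v u + \<mu> \<cdot>\<^sub>v u"
          unfolding w_def using T u v by (simp add: mult_add_distrib_mat_vec[of T n n] mult_mat_vec[OF T v] u_def)
        hence "(T *\<^sub>v w) $ i = - v $ i + \<mu> * u $ i" using i Tu[OF i] Tc[of u] u by simp
        also have "\<dots> = \<mu> * (u $ i + \<mu> * v $ i)"
        proof -
          have "\<mu> * (\<mu> * v $ i) = \<mu>^2 * v $ i" by (simp add: power2_eq_square mult.assoc)
          thus ?thesis using mu by (simp add: distrib_left)
        qed
        also have "\<dots> = (\<mu> \<cdot>\<^sub>v w) $ i" unfolding w_def using i u v by simp
        finally show "(T *\<^sub>v w) $ i = (\<mu> \<cdot>\<^sub>v w) $ i" .
      qed (use T w in simp)
      thus ?thesis using w False by blast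
    qed
  next
    assume "\<exists>ev\<in>{\<mu>, -\<mu>}. \<exists>w. w \<in> carrier_vec n \<and> w \<noteq> 0\<^sub>v n \<and> T *\<^sub>v w = ev \<cdot>\<^sub>v w"
    then obtain ev w where ev: "ev \<in> {\<mu>, -\<mu>}" and w: "w \<in> carrier_vec n" and w0: "w \<noteq> 0\<^sub>v n"
      and Tw: "T *\<^sub>v w = ev \<cdot>\<^sub>v w" by blast
    have l: "ev^2 = -1" using ev mu by (auto simp: power2_eq_square)
    have "(1\<^sub>m n + T * T) *\<^sub>v w = 0\<^sub>v n"
    proof (rule eq_vecI)
      fix i assume "i < dim_vec (0\<^sub>v n)" hence i: "i < n" by simp
      have "T *\<^sub>v (T *\<^sub>v w) = ev \<cdot>\<^sub>v (ev \<cdot>\<^sub>v w)" using Tw mult_mat_vec[OF T w] by simp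
      hence "((1\<^sub>m n + T * T) *\<^sub>v w) $ i = w $ i + ev * (ev * w $ i)" using Mv[OF w] i w by simp
      also have "\<dots> = 0"
      proof -
        have "ev * (ev * w $ i) = ev^2 * w $ i" by (simp add: power2_eq_square mult.assoc)
        thus ?thesis using l by simp
      qed
      finally show "((1\<^sub>m n + T * T) *\<^sub>v w) $ i = 0\<^sub>v n $ i" using i by simp
    qed (use T in simp)
    thus "\<exists>v. v \<in> carrier_vec n \<and> v \<noteq> 0\<^sub>v n \<and> (1\<^sub>m n + T * T) *\<^sub>v v = 0\<^sub>v n" using w w0 by blast
  qed
qed

fun Qp :: "nat \<Rightarrow> 'c::comm_ring_1 poly" where
  "Qp 0 = 0" | "Qp (Suc 0) = 1" | "Qp (Suc (Suc k)) = [:0,1:] * Qp (Suc k) - Qp k"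

lemma Qs_rec: "poly (Qp (Suc (Suc k))) x = x * poly (Qp (Suc k)) x - poly (Qp k) x"
  by simp

lemma tri_row:
  fixes a b :: "'b::field"
  assumes w: "w \<in> carrier_vec n" and i: "i < n"
  shows "(tridiag_toeplitz n a b *\<^sub>v w) $ i =
     a * w $ i + (if 0 < i then b * w $ (i - 1) else 0) + (if i + 1 < n then b * w $ (i + 1) else 0)"
proof -
  have "(tridiag_toeplitz n a b *\<^sub>v w) $ i =
      (\<Sum>j\<in>{0..<n}. (if i = j then a else if i = j + 1 \<or> j = i + 1 then b else 0) * w $ j)"
    using w i by (simp add: tridiag_toeplitz_def scalar_prod_def)
  also have "\<dots> = (\<Sum>j\<in>{0..<n}. (if j = i then a * w $ j else 0) + (if j + 1 = i then b * w $ j else 0)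
       + (if j = i + 1 then b * w $ j else 0))"
    by (intro sum.cong refl) auto
  also have "\<dots> = (\<Sum>j\<in>{0..<n}. if j = i then a * w $ j else 0) + (\<Sum>j\<in>{0..<n}. if j + 1 = i then b * w $ j else 0)
       + (\<Sum>j\<in>{0..<n}. if j = i + 1 then b * w $ j else 0)"
    by (simp add: sum.distrib)
  also have "(\<Sum>j\<in>{0..<n}. if j = i then a * w $ j else 0) = a * w $ i" using i by simp
  also have "(\<Sum>j\<in>{0..<n}. if j = i + 1 then b * w $ j else 0) = (if i + 1 < n then b * w $ (i + 1) else 0)"
    by simp
  also have "(\<Sum>j\<in>{0..<n}. if j + 1 = i then b * w $ j else 0) = (if 0 < i then b * w $ (i - 1) else 0)"
  proof (cases i)
    case 0 thus ?thesis by simp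
  next
    case (Suc k)
    have "(\<Sum>j\<in>{0..<n}. if j + 1 = i then b * w $ j else 0) = (\<Sum>j\<in>{0..<n}. if j = k then b * w $ j else 0)"
      using Suc by (intro sum.cong refl) auto
    thus ?thesis using Suc i by simp
  qed
  finally show ?thesis .
qed


lemma lin3: fixes a b ev x u0 u1 u2 :: "'b::field"
  assumes h1: "a*u1 + b*u0 + b*u2 = ev*u1" and h2: "b*x = ev - a"
  shows "b*u2 = b*(x*u1 - u0)"
proof -
  have "b*u2 = ev*u1 - (a*u1 + b*u0)" using h1 by (simp add: eq_diff_eq add.commute)
  also have "\<dots> = (ev - a)*u1 - b*u0" by (simp add: algebra_simps)
  also have "\<dots> = b*(x*u1 - u0)" using h2[symmetric] by (simp add: algebra_simps)
  finally show ?thesis .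
qed

lemma lin2: fixes a b ev x u0 u1 :: "'b::field"
  assumes h1: "a*u1 + b*u0 = ev*u1" and h2: "b*x = ev - a"
  shows "b*(x*u1 - u0) = 0"
  using lin3[of a u1 b u0 0 ev x] h1 h2 by simp

lemma tri_eig:
  fixes a b ev :: "'b::field"
  assumes b: "b \<noteq> 0" and n: "2 \<le> n"
  shows "(\<exists>w. w \<in> carrier_vec n \<and> w \<noteq> 0\<^sub>v n \<and> tridiag_toeplitz n a b *\<^sub>v w = ev \<cdot>\<^sub>v w)
         \<longleftrightarrow> poly (Qp (n+1)) ((ev - a) / b) = 0"
proof -
  define x where "x = (ev - a) / b"
  define Q where "Q k = poly (Qp k) x" for k
  have bx: "b * x = ev - a" unfolding x_def using b by simp
  have Q0: "Q 0 = 0" and Q1: "Q 1 = 1" and QS: "Q (Suc (Suc k)) = x * Q (Suc k) - Q k" for k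
    unfolding Q_def by simp_all
  let ?T = "tridiag_toeplitz n a b"
  show ?thesis unfolding x_def[symmetric] Q_def[symmetric]
  proof
    assume "\<exists>w. w \<in> carrier_vec n \<and> w \<noteq> 0\<^sub>v n \<and> ?T *\<^sub>v w = ev \<cdot>\<^sub>v w"
    then obtain w where w: "w \<in> carrier_vec n" and w0: "w \<noteq> 0\<^sub>v n" and Tw: "?T *\<^sub>v w = ev \<cdot>\<^sub>v w" by blast
    have row: "a * w $ i + (if 0 < i then b * w $ (i - 1) else 0) + (if i + 1 < n then b * w $ (i + 1) else 0)
       = ev * w $ i" if i: "i < n" for i
      using tri_row[OF w i, of a b] Tw i w by simp
    have claim: "j < n \<longrightarrow> w $ j = w $ 0 * Q (j + 1)" for j
    proof (induction j rule: less_induct)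
      case (less j)
      show ?case
      proof (cases j)
        case 0 thus ?thesis using Q1 by simp
      next
        case (Suc k)
        show ?thesis
        proof (cases k)
          case 0
          have "a * w $ 0 + b * w $ 1 = ev * w $ 0" using row[of 0] n by simp
          hence "b * w $ 1 = (ev - a) * w $ 0" by (simp add: algebra_simps)
          hence "b * w $ 1 = b * (x * w $ 0)" using bx by (simp add: mult.assoc)
          hence "w $ 1 = x * w $ 0" using b by simp
          thus ?thesis using Suc 0 QS[of 0] Q0 Q1 by simp
        next
          case (Suc l)
          show ?thesis
          proof
            assume jn: "j < n"
            have r: "a * w $ (l+1) + b * w $ l + b * w $ (l+2) = ev * w $ (l+1)"
              using row[of "l+1"] jn \<open>j = Suc k\<close> Suc by simp
            have IH1: "w $ (l+1) = w $ 0 * Q (l + 2)" using less[of "l+1"] jn \<open>j = Suc k\<close> Suc by simp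
            have IH0: "w $ l = w $ 0 * Q (l + 1)" using less[of "l"] jn \<open>j = Suc k\<close> Suc by simp
            have "b * w $ (l+2) = b * (x * w $ (l+1) - w $ l)" using lin3[OF r bx] .
            hence "w $ (l+2) = x * w $ (l+1) - w $ l" using b by simp
            also have "\<dots> = w $ 0 * (x * Q (l+2) - Q (l+1))" using IH0 IH1 by (simp add: algebra_simps)
            also have "\<dots> = w $ 0 * Q (l + 3)" using QS[of "l+1"] by (simp add: numeral_eq_Suc)
            finally show "w $ j = w $ 0 * Q (j + 1)" using \<open>j = Suc k\<close> Suc by (simp add: numeral_eq_Suc)
          qed
        qed
      qed
    qed
    have w00: "w $ 0 \<noteq> 0"
    proof
      assume "w $ 0 = 0"
      hence "w = 0\<^sub>v n" using claim w by (intro eq_vecI) auto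
      thus False using w0 by simp
    qed
    obtain k where k: "n = Suc (Suc k)" using n by (metis add_2_eq_Suc le_Suc_ex)
    have r: "a * w $ (k+1) + b * w $ k = ev * w $ (k+1)"
      using row[of "k+1"] k by simp
    have e: "w $ (k+1) = w $ 0 * Q (k+2)" "w $ k = w $ 0 * Q (k+1)" using claim[of "k+1"] claim[of k] k by simp_all
    have "b * (x * w $ (k+1) - w $ k) = 0" using lin2[OF r bx] .
    hence "b * (x * (w $ 0 * Q (k+2)) - w $ 0 * Q (k+1)) = 0" unfolding e .
    hence "b * (w $ 0 * (x * Q (k+2) - Q (k+1))) = 0" by (simp add: algebra_simps)
    hence "x * Q (k+2) - Q (k+1) = 0" using b w00 by simp
    thus "Q (n + 1) = 0" using QS[of "k+1"] k by (simp add: numeral_eq_Suc)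
  next
    assume Qn: "Q (n + 1) = 0"
    define w where "w = vec n (\<lambda>j. Q (j + 1))"
    have w: "w \<in> carrier_vec n" unfolding w_def by simp
    have w0: "w \<noteq> 0\<^sub>v n"
    proof
      assume "w = 0\<^sub>v n"
      hence "w $ 0 = 0" using n by simp
      thus False using n Q1 unfolding w_def by simp
    qed
    have "?T *\<^sub>v w = ev \<cdot>\<^sub>v w"
    proof (rule eq_vecI)
      fix i assume "i < dim_vec (ev \<cdot>\<^sub>v w)"
      hence i: "i < n" using w by simp
      have e1: "(if 0 < i then b * w $ (i - 1) else 0) = b * Q i"
        using i Q0 unfolding w_def by auto
      have e2: "(if i + 1 < n then b * w $ (i + 1) else 0) = b * Q (i + 2)"
      proof (cases "i + 1 < n")
        case True thus ?thesis unfolding w_def by simp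
      next
        case False hence "i + 1 = n" using i by simp
        thus ?thesis using Qn by (simp add: numeral_eq_Suc)
      qed
      have "(?T *\<^sub>v w) $ i = a * Q (i+1) + b * Q i + b * Q (i + 2)"
        using tri_row[OF w i, of a b] e1 e2 i unfolding w_def by simp
      also have "\<dots> = a * Q (i+1) + b * (Q i + Q (i + 2))" by (simp add: algebra_simps)
      also have "Q i + Q (i + 2) = x * Q (i+1)" using QS[of i] by (simp add: numeral_eq_Suc)
      also have "a * Q (i+1) + b * (x * Q (i+1)) = a * Q (i+1) + b * x * Q (i+1)" by (simp add: mult.assoc)
      also have "\<dots> = (a + b * x) * Q (i+1)" by (simp add: distrib_right)
      also have "\<dots> = ev * Q (i+1)" using bx by simp
      finally show "(?T *\<^sub>v w) $ i = (ev \<cdot>\<^sub>v w) $ i" using i unfolding w_def by simp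
    qed (simp add: w_def tridiag_toeplitz_def)
    thus "\<exists>w. w \<in> carrier_vec n \<and> w \<noteq> 0\<^sub>v n \<and> ?T *\<^sub>v w = ev \<cdot>\<^sub>v w" using w w0 by blast
  qed
qed

lemma frob_add:
  fixes A B :: "'c::comm_ring_1"
  assumes p: "prime p" and p0: "of_nat p = (0::'c)"
  shows "(A + B) ^ p = A ^ p + B ^ p"
proof -
  have "(A + B) ^ p = (\<Sum>k\<le>p. of_nat (p choose k) * A ^ k * B ^ (p - k))"
    by (rule binomial_ring)
  also have "\<dots> = (\<Sum>k\<in>{0, p}. of_nat (p choose k) * A ^ k * B ^ (p - k))"
  proof (rule sum.mono_neutral_right)
    show "\<forall>k\<in>{..p} - {0, p}. of_nat (p choose k) * A ^ k * B ^ (p - k) = 0"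
    proof
      fix k assume k: "k \<in> {..p} - {0, p}"
      have "p dvd (p choose k)" using k p by (intro dvd_choose_prime) (auto simp: prime_gt_0_nat)
      then obtain c where "p choose k = p * c" by (auto simp: dvd_def)
      hence "of_nat (p choose k) = (0::'c)" using p0 by simp
      thus "of_nat (p choose k) * A ^ k * B ^ (p - k) = 0" by simp
    qed
  qed auto
  also have "\<dots> = A ^ p + B ^ p" using p by (simp add: prime_gt_0_nat)
  finally show ?thesis .
qed

lemma frob_diff_pow:
  fixes A B :: "'c::comm_ring_1"
  assumes p: "prime p" and po: "odd p" and p0: "of_nat p = (0::'c)"
  shows "(A - B) ^ (p ^ r) = A ^ (p ^ r) - B ^ (p ^ r)"
proof (induction r)
  case 0 thus ?case by simp
next
  case (Suc r)
  have "(A - B) ^ (p ^ Suc r) = ((A - B) ^ (p ^ r)) ^ p" by (simp add: power_mult[symmetric] mult.commute)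
  also have "\<dots> = (A ^ (p ^ r) + uminus (B ^ (p ^ r))) ^ p" using Suc by simp
  also have "\<dots> = (A ^ (p ^ r)) ^ p + (uminus (B ^ (p ^ r))) ^ p" by (rule frob_add[OF p p0])
  also have "(uminus (B ^ (p ^ r))) ^ p = uminus ((B ^ (p ^ r)) ^ p)" using po by (simp add: power_minus_odd)
  finally show ?case by (simp add: power_mult[symmetric] mult.commute)
qed

lemma Qp_deg: "degree (Qp (Suc k) :: 'c::field poly) = k \<and> coeff (Qp (Suc k) :: 'c poly) k = 1"
proof (induction k rule: nat_less_induct)
  case (1 k)
  show ?case
  proof (cases k)
    case 0 thus ?thesis by simp
  next
    case (Suc j)
    show ?thesis
    proof (cases j)
      case 0 thus ?thesis using Suc by simp
    next
      case (Suc l)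
      have lt: "Suc l < k" "l < k" using \<open>k = Suc j\<close> Suc by simp_all
      have IH1: "degree (Qp (Suc (Suc l)) :: 'c poly) = Suc l" "coeff (Qp (Suc (Suc l)) :: 'c poly) (Suc l) = 1"
        using 1 lt(1) by blast+
      have IH0: "degree (Qp (Suc l) :: 'c poly) = l"
        using 1 lt(2) by blast
      have e: "(Qp (Suc k) :: 'c poly) = pCons 0 (Qp (Suc (Suc l))) - Qp (Suc l)"
        using \<open>k = Suc j\<close> Suc by simp
      have c0: "coeff (Qp l :: 'c poly) (Suc l) = 0"
      proof (cases l)
        case (Suc l')
        have "degree (Qp (Suc l') :: 'c poly) = l'" using 1 lt(2) Suc by auto
        thus ?thesis using Suc by (intro coeff_eq_0) simp
      qed simp
      have c: "coeff (Qp (Suc k) :: 'c poly) k = 1"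
        unfolding e using IH1 IH0 c0 \<open>k = Suc j\<close> Suc by (simp add: coeff_eq_0)
      have "degree (Qp (Suc k) :: 'c poly) \<le> k"
        unfolding e using IH1 IH0 \<open>k = Suc j\<close> Suc
        by (intro degree_diff_le) (auto simp: degree_pCons_le intro: order.trans[OF degree_pCons_le])
      moreover have "k \<le> degree (Qp (Suc k) :: 'c poly)" using c by (intro le_degree) simp
      ultimately show ?thesis using c by simp
    qed
  qed
qed

lemma Q_neg: "poly (Qp k) (- x) = (-1) ^ (k + 1) * poly (Qp k) (x :: 'c::comm_ring_1)"
  by (induction k rule: Qp.induct) (auto simp: algebra_simps)

lemma Q_two: "poly (Qp k) (2 :: 'c::comm_ring_1) = of_nat k"
  by (induction k rule: Qp.induct) (auto simp: algebra_simps)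

lemma Q_y:
  fixes y :: "'c::field"
  assumes y: "y \<noteq> 0"
  shows "poly (Qp k) (y + inverse y) * (y - inverse y) = y ^ k - inverse y ^ k"
proof (induction k rule: Qp.induct)
  case (3 k)
  let ?z = "inverse y"
  have yz: "y * ?z = 1" using y by simp
  have h1: "y * ?z ^ Suc k = ?z ^ k" using yz by (simp add: mult.assoc[symmetric])
  have h2: "?z * y ^ Suc k = y ^ k" using yz by (simp add: mult.assoc[symmetric] mult.commute)
  have "poly (Qp (Suc (Suc k))) (y + ?z) * (y - ?z) =
     (y + ?z) * (poly (Qp (Suc k)) (y + ?z) * (y - ?z)) - poly (Qp k) (y + ?z) * (y - ?z)"
    by (simp add: algebra_simps)
  also have "\<dots> = (y + ?z) * (y ^ Suc k - ?z ^ Suc k) - (y ^ k - ?z ^ k)" using 3 by simp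
  also have "\<dots> = y * y ^ Suc k - y * ?z ^ Suc k + ?z * y ^ Suc k - ?z * ?z ^ Suc k - (y ^ k - ?z ^ k)"
    by (simp add: algebra_simps)
  also have "\<dots> = y ^ Suc (Suc k) - ?z ^ Suc (Suc k)"
    unfolding h1 h2 by (simp add: algebra_simps)
  finally show ?case .
qed auto

lemma pow_rec2:
  fixes a b :: "'c::comm_ring_1"
  shows "a ^ Suc (Suc k) - b ^ Suc (Suc k) = (a + b) * (a ^ Suc k - b ^ Suc k) - (a * b) * (a ^ k - b ^ k)"
  by (simp add: algebra_simps)

lemma const_poly_power: "[:c:] ^ h = [:c ^ h:]"
  by (induction h) (auto simp: mult.commute)

lemma Q_mult_char:
  fixes x :: "'b::field"
  assumes p: "prime p" and po: "odd p" and p0: "of_nat p = (0::'b)" and x4: "x^2 \<noteq> 4"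
  shows "poly (Qp (p ^ r * k)) x = poly (Qp k) x ^ (p ^ r) * (x^2 - 4) ^ ((p ^ r - 1) div 2)"
proof -
  define Y :: "'b poly" where "Y = [:0, 1:]"
  define Z :: "'b poly" where "Z = [:x, -1:]"
  define f :: "'b poly" where "f = [:1, -x, 1:]"
  define V where "V = Y - Z"
  define c where "c = x^2 - 4"
  define q where "q = p ^ r"
  define h where "h = (q - 1) div 2"
  define Q where "Q j = poly (Qp j) x" for j
  have YZ: "Y * Z = 1 - f" unfolding Y_def Z_def f_def by (simp add: one_pCons)
  have YpZ: "Y + Z = [:x:]" unfolding Y_def Z_def by simp
  have V2: "V^2 = [:c:] + smult 4 f" unfolding V_def Y_def Z_def f_def c_def
    by (simp add: power2_eq_square algebra_simps)
  have fnz: "f \<noteq> 0" unfolding f_def by simp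
  have degf: "degree f = 2" unfolding f_def by simp
  have S1: "f dvd (smult (Q j) V - (Y ^ j - Z ^ j))" for j
  proof (induction j rule: Qp.induct)
    case 1 thus ?case by (simp add: Q_def)
  next
    case 2 thus ?case by (simp add: Q_def V_def)
  next
    case (3 k)
    have e: "smult (Q (Suc (Suc k))) V - (Y ^ Suc (Suc k) - Z ^ Suc (Suc k)) =
       smult x (smult (Q (Suc k)) V - (Y ^ Suc k - Z ^ Suc k)) - (smult (Q k) V - (Y ^ k - Z ^ k))
       - f * (Y ^ k - Z ^ k)"
    proof -
      have P: "Y ^ Suc (Suc k) - Z ^ Suc (Suc k) = smult x (Y ^ Suc k - Z ^ Suc k) - (1 - f) * (Y ^ k - Z ^ k)"
        using pow_rec2[of Y k Z] unfolding YZ YpZ by simp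
      have Q2: "smult (Q (Suc (Suc k))) V = smult x (smult (Q (Suc k)) V) - smult (Q k) V"
        unfolding Q_def by (simp add: smult_diff_left)
      show ?thesis unfolding P Q2 by (simp add: algebra_simps smult_diff_right smult_add_right)
    qed
    have i1: "f dvd (smult (Q (Suc k)) V - (Y ^ Suc k - Z ^ Suc k))"
      and i0: "f dvd (smult (Q k) V - (Y ^ k - Z ^ k))" using 3 by auto
    have d1: "f dvd smult x (smult (Q (Suc k)) V - (Y ^ Suc k - Z ^ Suc k))" using i1 by (rule dvd_smult)
    have d2: "f dvd f * (Y ^ k - Z ^ k)" by simp
    show ?case unfolding e by (rule dvd_diff[OF dvd_diff[OF d1 i0] d2])
  qed
  have cong1: "[A = B] (mod f) \<longleftrightarrow> f dvd (A - B)" for A B by (rule cong_iff_dvd_diff)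
  have qodd: "odd q" unfolding q_def using po by simp
  hence qh: "q = Suc (2 * h)" unfolding h_def by presburger
  have pp0: "of_nat p = (0 :: 'b poly)" using p0 by (simp add: of_nat_poly)
  have Nq: "Y ^ (q * k) - Z ^ (q * k) = (Y ^ k - Z ^ k) ^ q"
    unfolding q_def using frob_diff_pow[OF p po pp0, of "Y ^ k" "Z ^ k" r]
    by (simp add: power_mult[symmetric] mult.commute)
  have c6: "[smult (Q (q * k)) V = Y ^ (q * k) - Z ^ (q * k)] (mod f)" using S1 cong1 by blast
  have c1: "[Y ^ k - Z ^ k = smult (Q k) V] (mod f)" using S1 cong1 cong_sym by blast
  have c2: "[(Y ^ k - Z ^ k) ^ q = (smult (Q k) V) ^ q] (mod f)" by (rule cong_pow[OF c1])
  have c3: "[V^2 = [:c:]] (mod f)" unfolding cong1 V2 by (simp add: dvd_smult)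
  have c4: "[(V^2) ^ h = [:c:] ^ h] (mod f)" by (rule cong_pow[OF c3])
  have e1: "(smult (Q k) V) ^ q = smult (Q k ^ q) V * (V^2) ^ h"
  proof -
    have "V ^ q = V * (V^2) ^ h" unfolding qh by (simp add: power_mult)
    thus ?thesis unfolding smult_power by simp
  qed
  have c5: "[smult (Q k ^ q) V * (V^2) ^ h = smult (Q k ^ q) V * [:c:] ^ h] (mod f)"
    by (rule cong_mult[OF cong_refl c4])
  have e2: "smult (Q k ^ q) V * [:c:] ^ h = smult (Q k ^ q * c ^ h) V"
    by (simp add: const_poly_power mult.commute)
  have "[smult (Q (q * k)) V = smult (Q k ^ q * c ^ h) V] (mod f)"
    using c6 Nq c2 e1 c5 e2 cong_trans by metis
  hence "f dvd smult (Q (q * k) - Q k ^ q * c ^ h) V" unfolding cong1 by (simp add: smult_diff_left)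
  moreover define d where "d = Q (q * k) - Q k ^ q * c ^ h"
  ultimately have "f dvd smult d V" by simp
  hence "f dvd smult d V * V" by (rule dvd_mult2)
  also have "smult d V * V = smult d (V^2)"
    by (simp add: power2_eq_square)
  also have "\<dots> = [:d * c:] + f * smult (4 * d) 1"
    unfolding V2 by (simp add: smult_add_right mult.commute)
  finally have "f dvd [:d * c:] + f * smult (4 * d) 1" .
  hence "f dvd [:d * c:]" by (metis dvd_add_left_iff dvd_triv_left)
  hence "[:d * c:] = 0"
    using dvd_imp_degree_le[of f] degf by fastforce
  moreover have "c \<noteq> 0" using x4 unfolding c_def by simp
  ultimately have "Q (q * k) = Q k ^ q * c ^ h" unfolding d_def by simp
  thus ?thesis unfolding Q_def q_def c_def h_def .
qed

lemma inv_eq_lemma: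
  fixes u v :: "'b::field"
  assumes u: "u \<noteq> 0" and v: "v \<noteq> 0" and e: "u + inverse u = v + inverse v"
  shows "u = v \<or> u * v = 1"
proof -
  have h: "(u*u + 1) * v = (v*v + 1) * u" using e u v by (simp add: field_simps)
  have "(u - v) * (u * v - 1) = (u*u + 1) * v - (v*v + 1) * u" by (simp add: algebra_simps)
  hence "(u - v) * (u * v - 1) = 0" using h by simp
  thus ?thesis by simp
qed

lemma Qm_roots:
  fixes \<theta> x :: "'b::field"
  assumes th: "primitive_root_of_unity (2 * (m + 1)) \<theta>"
  shows "poly (Qp (m + 1)) x = 0 \<longleftrightarrow> (\<exists>i. 1 \<le> i \<and> i \<le> m \<and> x = \<theta> ^ i + inverse (\<theta> ^ i))"
proof -
  have th1: "\<theta> ^ (2 * (m + 1)) = 1" and thp: "\<And>j. 0 < j \<Longrightarrow> j < 2 * (m + 1) \<Longrightarrow> \<theta> ^ j \<noteq> 1"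
    using th unfolding primitive_root_of_unity_def by auto
  have th0: "\<theta> \<noteq> 0"
  proof
    assume "\<theta> = 0" thus False using th1 by simp
  qed
  define cc where "cc i = \<theta> ^ i + inverse (\<theta> ^ i)" for i :: nat
  have root: "poly (Qp (m + 1)) (cc i) = 0" if i: "1 \<le> i" "i \<le> m" for i
  proof -
    define y where "y = \<theta> ^ i"
    have y0: "y \<noteq> 0" unfolding y_def using th0 by simp
    have y2: "y * y \<noteq> 1"
    proof
      assume "y * y = 1"
      hence "\<theta> ^ (2 * i) = 1" unfolding y_def by (simp add: power_mult[symmetric] mult_2 power_add)
      thus False using thp[of "2 * i"] i by simp
    qed
    have ym: "y - inverse y \<noteq> 0"
    proof
      assume "y - inverse y = 0"
      hence "y * y = y * inverse y" by simp
      thus False using y2 y0 by simp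
    qed
    have "(y ^ (m + 1)) * (y ^ (m + 1)) = 1"
    proof -
      have "(y ^ (m + 1)) * (y ^ (m + 1)) = (\<theta> ^ (2 * (m + 1))) ^ i"
      proof -
        have "(y ^ (m + 1)) * (y ^ (m + 1)) = y ^ (2 * (m + 1))" by (simp only: mult_2 power_add)
        also have "\<dots> = (\<theta> ^ (2 * (m + 1))) ^ i" unfolding y_def by (metis power_mult mult.commute)
        finally show ?thesis .
      qed
      thus ?thesis using th1 by simp
    qed
    hence "y ^ (m + 1) = inverse (y ^ (m + 1))" by (metis inverse_unique)
    hence "y ^ (m + 1) - inverse y ^ (m + 1) = 0" by (simp add: power_inverse)
    hence "poly (Qp (m + 1)) (y + inverse y) * (y - inverse y) = 0" using Q_y[OF y0, of "m + 1"] by simp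
    thus ?thesis using ym unfolding cc_def y_def by simp
  qed
  have inj: "inj_on cc {1..m}"
  proof (rule inj_onI)
    fix i j assume i: "i \<in> {1..m}" and j: "j \<in> {1..m}" and e: "cc i = cc j"
    have "\<theta> ^ i = \<theta> ^ j \<or> \<theta> ^ i * \<theta> ^ j = 1"
      using inv_eq_lemma[of "\<theta> ^ i" "\<theta> ^ j"] e th0 unfolding cc_def by simp
    moreover have "\<theta> ^ i * \<theta> ^ j \<noteq> 1"
      using thp[of "i + j"] i j by (simp add: power_add)
    moreover have "\<theta> ^ i \<noteq> \<theta> ^ j" if "i \<noteq> j"
    proof
      assume eq: "\<theta> ^ i = \<theta> ^ j"
      show False
      proof (cases "i < j")
        case True
        have "\<theta> ^ j = \<theta> ^ i * \<theta> ^ (j - i)" using True by (simp add: power_add[symmetric])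
        hence "\<theta> ^ (j - i) = 1" using eq th0 by simp
        moreover have "j - i < 2 * (m + 1)" using j by auto
        ultimately show False using thp[of "j - i"] True by simp
      next
        case False
        hence "j < i" using that by simp
        have "\<theta> ^ i = \<theta> ^ j * \<theta> ^ (i - j)" using \<open>j < i\<close> by (simp add: power_add[symmetric])
        hence "\<theta> ^ (i - j) = 1" using eq th0 by simp
        moreover have "i - j < 2 * (m + 1)" using i by auto
        ultimately show False using thp[of "i - j"] \<open>j < i\<close> by simp
      qed
    qed
    ultimately show "i = j" by blast
  qed
  have Qnz: "(Qp (m + 1) :: 'b poly) \<noteq> 0" and degQ: "degree (Qp (m + 1) :: 'b poly) = m"
    using Qp_deg[of m, where 'c='b] by auto
  show ?thesis
  proof
    assume x: "poly (Qp (m + 1)) x = 0"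
    show "\<exists>i. 1 \<le> i \<and> i \<le> m \<and> x = \<theta> ^ i + inverse (\<theta> ^ i)"
    proof (rule ccontr)
      assume nx: "\<not> ?thesis"
      have sub: "insert x (cc ` {1..m}) \<subseteq> {x. poly (Qp (m + 1)) x = 0}"
        using x root by auto
      have "x \<notin> cc ` {1..m}" using nx unfolding cc_def by auto
      hence "card (insert x (cc ` {1..m})) = m + 1"
        using card_image[OF inj] by simp
      moreover have "card (insert x (cc ` {1..m})) \<le> card {x. poly (Qp (m + 1)) x = (0::'b)}"
        using sub poly_roots_finite[OF Qnz] by (intro card_mono) auto
      moreover have "card {x. poly (Qp (m + 1)) x = (0::'b)} \<le> m"
        using card_poly_roots_bound[OF Qnz] degQ by simp
      ultimately show False by simp
    qed
  next
    assume "\<exists>i. 1 \<le> i \<and> i \<le> m \<and> x = \<theta> ^ i + inverse (\<theta> ^ i)"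
    thus "poly (Qp (m + 1)) x = 0" using root unfolding cc_def by auto
  qed
qed

lemma Q_zero_iff:
  fixes x \<theta> :: "'b::field"
  assumes p: "prime p" and po: "odd p" and p0: "of_nat p = (0::'b)" and r: "r \<ge> 1"
    and th: "primitive_root_of_unity (2 * (m + 1)) \<theta>"
  shows "poly (Qp (p ^ r * (m + 1))) x = 0 \<longleftrightarrow>
     x = 2 \<or> x = -2 \<or> (\<exists>i. 1 \<le> i \<and> i \<le> m \<and> x = \<theta> ^ i + inverse (\<theta> ^ i))"
proof (cases "x^2 = 4")
  case True
  hence x: "x = 2 \<or> x = -2"
  proof -
    have "(x - 2) * (x + 2) = 0" using True by (simp add: algebra_simps power2_eq_square)
    thus ?thesis by (simp add: eq_neg_iff_add_eq_0)
  qed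
  have "p dvd p ^ r * (m + 1)" using r by (simp add: dvd_power)
  then obtain e where e: "p ^ r * (m + 1) = p * e" by (auto simp: dvd_def)
  have N0: "(of_nat (p ^ r * (m + 1)) :: 'b) = 0" unfolding e using p0 by simp
  have q2: "poly (Qp (p ^ r * (m + 1))) (2::'b) = of_nat (p ^ r * (m + 1))" by (rule Q_two)
  have qm2: "poly (Qp (p ^ r * (m + 1))) (-2::'b) = (-1) ^ (p ^ r * (m + 1) + 1) * poly (Qp (p ^ r * (m + 1))) 2"
    by (rule Q_neg)
  have "poly (Qp (p ^ r * (m + 1))) x = 0"
    using x N0 q2 qm2 by auto
  thus ?thesis using x by blast
next
  case False
  have "x \<noteq> 2" "x \<noteq> -2" using False by auto
  moreover have "poly (Qp (p ^ r * (m + 1))) x = 0 \<longleftrightarrow> poly (Qp (m + 1)) x = 0"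
  proof -
    have "poly (Qp (p ^ r * (m + 1))) x = poly (Qp (m + 1)) x ^ (p ^ r) * (x^2 - 4) ^ ((p ^ r - 1) div 2)"
      by (rule Q_mult_char[OF p po p0 False])
    moreover have "x^2 - 4 \<noteq> 0" using False by simp
    moreover have "p ^ r \<noteq> 0" using p by (simp add: prime_gt_0_nat)
    ultimately show ?thesis by simp
  qed
  ultimately show ?thesis using Qm_roots[OF th] by simp
qed

lemma emb_hom: "field_embedding emb \<Longrightarrow> field_hom emb"
  unfolding field_embedding_def
proof (unfold_locales, goal_cases)
  case 1
  have "emb (0 + 0) = emb 0 + emb 0" using 1 by blast
  hence "emb 0 + emb 0 = emb 0 + 0" by simp
  thus ?case by (rule add_left_imp_eq)
qed auto

lemma map_tri:
  assumes "field_hom emb"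
  shows "map_mat emb (tridiag_toeplitz n a b) = tridiag_toeplitz n (emb a) (emb b)"
proof -
  interpret h: field_hom emb by fact
  show ?thesis by (rule eq_matI) (auto simp: tridiag_toeplitz_def)
qed

lemma main_iff:
  fixes a b :: "'a::{field, finite}"
    and emb :: "'a \<Rightarrow> 'b::field"
    and \<mu> \<theta> :: 'b
    and p n r m :: nat
  assumes p_prime: "prime p" and p_odd: "odd p" and char: "CHAR('a) = p"
    and b_nz: "b \<noteq> 0" and n_ge: "n \<ge> 2"
    and m_def: "n + 1 = p ^ r * (m + 1)"
    and r_pos: "r \<ge> 1"
    and emb: "field_embedding emb"
    and mu: "\<mu>\<^sup>2 = -1"
    and theta: "primitive_root_of_unity (2 * (m + 1)) \<theta>"
  shows "is_LCD (2 * n) (hatC n a b) \<longleftrightarrow>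
      emb a / emb b \<notin>
                {- \<mu> / emb b + 2, - \<mu> / emb b - 2, \<mu> / emb b + 2, \<mu> / emb b - 2}
                \<union> {- \<mu> / emb b + \<theta> ^ i + inverse (\<theta> ^ i) | i. 1 \<le> i \<and> i \<le> m}
                \<union> {\<mu> / emb b + \<theta> ^ i + inverse (\<theta> ^ i) | i. 1 \<le> i \<and> i \<le> m}"
proof -
  interpret h: field_hom emb by (rule emb_hom[OF emb])
  have inj: "inj emb" using emb unfolding field_embedding_def by blast
  let ?T = "tridiag_toeplitz n a b"
  let ?M = "1\<^sub>m n + ?T * ?T"
  let ?a = "emb a" and ?b = "emb b"
  let ?T' = "tridiag_toeplitz n ?a ?b"
  have Tc: "?T \<in> carrier_mat n n" by (rule tri_carrier)
  have Mc: "?M \<in> carrier_mat n n" using Tc by auto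
  have b': "?b \<noteq> 0" using b_nz inj by (metis h.hom_zero injD)
  have p0a: "of_nat p = (0::'a)" by (metis char of_nat_CHAR)
  have p0: "of_nat p = (0::'b)" using arg_cong[OF p0a, of emb] by (simp add: h.hom_of_nat)
  have mapM: "map_mat emb ?M = 1\<^sub>m n + ?T' * ?T'"
  proof -
    have "map_mat emb ?M = map_mat emb (1\<^sub>m n) + map_mat emb (?T * ?T)"
      using Tc by (intro eq_matI) (auto simp: h.hom_add)
    also have "map_mat emb (?T * ?T) = map_mat emb ?T * map_mat emb ?T"
      by (rule h.mat_hom_mult[OF Tc Tc])
    also have "map_mat emb ?T = ?T'" by (rule map_tri[OF emb_hom[OF emb]])
    also have "map_mat emb (1\<^sub>m n) = 1\<^sub>m n" by (rule h.mat_hom_one)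
    finally show ?thesis .
  qed
  have T'c: "?T' \<in> carrier_mat n n" by (rule tri_carrier)
  have M'c: "1\<^sub>m n + ?T' * ?T' \<in> carrier_mat n n" using T'c by auto
  define S where "S = {2, -2} \<union> {\<theta> ^ i + inverse (\<theta> ^ i) | i. 1 \<le> i \<and> i \<le> m}"
  have QS: "poly (Qp (n + 1)) y = 0 \<longleftrightarrow> y \<in> S" for y
    unfolding m_def S_def using Q_zero_iff[OF p_prime p_odd p0 r_pos theta, of y] by auto
  have "is_LCD (2 * n) (hatC n a b) \<longleftrightarrow> \<not> (\<exists>v. v \<in> carrier_vec n \<and> v \<noteq> 0\<^sub>v n \<and> ?M *\<^sub>v v = 0\<^sub>v n)"
    unfolding LCD_iff_kernel by blast
  also have "\<dots> \<longleftrightarrow> det ?M \<noteq> 0" using det_0_iff_vec_prod_zero_field[OF Mc] by simp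
  also have "\<dots> \<longleftrightarrow> emb (det ?M) \<noteq> 0" using inj by (metis h.hom_zero injD)
  also have "emb (det ?M) = det (1\<^sub>m n + ?T' * ?T')" unfolding mapM[symmetric] by simp
  also have "det (1\<^sub>m n + ?T' * ?T') \<noteq> 0 \<longleftrightarrow>
      \<not> (\<exists>v. v \<in> carrier_vec n \<and> v \<noteq> 0\<^sub>v n \<and> (1\<^sub>m n + ?T' * ?T') *\<^sub>v v = 0\<^sub>v n)"
    using det_0_iff_vec_prod_zero_field[OF M'c] by simp
  also have "\<dots> \<longleftrightarrow> \<not> (\<exists>ev\<in>{\<mu>, -\<mu>}. \<exists>w. w \<in> carrier_vec n \<and> w \<noteq> 0\<^sub>v n \<and> ?T' *\<^sub>v w = ev \<cdot>\<^sub>v w)"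
    using kernel_iff_eig[OF T'c mu] by simp
  also have "\<dots> \<longleftrightarrow> \<not> (\<exists>ev\<in>{\<mu>, -\<mu>}. poly (Qp (n + 1)) ((ev - ?a) / ?b) = 0)"
    using tri_eig[OF b' n_ge] by simp
  also have "\<dots> \<longleftrightarrow> \<not> (\<exists>ev\<in>{\<mu>, -\<mu>}. (?a - ev) / ?b \<in> S)"
  proof -
    have "poly (Qp (n + 1)) ((ev - ?a) / ?b) = 0 \<longleftrightarrow> (?a - ev) / ?b \<in> S" for ev
    proof -
      have "(ev - ?a) / ?b = - ((?a - ev) / ?b)" by (simp add: minus_divide_left)
      hence "poly (Qp (n + 1)) ((ev - ?a) / ?b) = (-1) ^ (n + 1 + 1) * poly (Qp (n + 1)) ((?a - ev) / ?b)"
        using Q_neg by metis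
      thus ?thesis using QS by simp
    qed
    thus ?thesis by simp
  qed
  also have "\<dots> \<longleftrightarrow> ?a / ?b \<notin>
                {- \<mu> / ?b + 2, - \<mu> / ?b - 2, \<mu> / ?b + 2, \<mu> / ?b - 2}
                \<union> {- \<mu> / ?b + \<theta> ^ i + inverse (\<theta> ^ i) | i. 1 \<le> i \<and> i \<le> m}
                \<union> {\<mu> / ?b + \<theta> ^ i + inverse (\<theta> ^ i) | i. 1 \<le> i \<and> i \<le> m}"
  proof -
    have key: "(?a - ev) / ?b = s \<longleftrightarrow> ?a / ?b = ev / ?b + s" for ev s
      using b' by (auto simp: field_simps)
    show ?thesis unfolding S_def
      by (auto simp: key add.assoc)
  qed
  finally show ?thesis .
qed

theorem theorem2p10:
  fixes a b :: "'a::{field, finite}"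
    and emb :: "'a \<Rightarrow> 'b::field"
    and \<mu> \<theta> :: 'b
    and p n r m :: nat
  assumes p_prime: "prime p" and p_odd: "odd p" and char: "CHAR('a) = p"
    and b_nz: "b \<noteq> 0" and n_ge: "n \<ge> 2"
    and r_div: "p ^ r dvd n + 1" and r_exact: "\<not> p ^ (r + 1) dvd n + 1"
    and m_def: "n + 1 = p ^ r * (m + 1)"
    and r_pos: "r \<ge> 1"
    and emb: "field_embedding emb"
    and mu: "\<mu>\<^sup>2 = -1"
    and theta: "primitive_root_of_unity (2 * (m + 1)) \<theta>"
  shows "(m > 0 \<longrightarrow>
            (is_LCD (2 * n) (hatC n a b) \<longleftrightarrow>
              emb a / emb b \<notin>
                {- \<mu> / emb b + 2, - \<mu> / emb b - 2, \<mu> / emb b + 2, \<mu> / emb b - 2}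
                \<union> {- \<mu> / emb b + \<theta> ^ i + inverse (\<theta> ^ i) | i. 1 \<le> i \<and> i \<le> m}
                \<union> {\<mu> / emb b + \<theta> ^ i + inverse (\<theta> ^ i) | i. 1 \<le> i \<and> i \<le> m}))
       \<and> (m = 0 \<longrightarrow>
            (is_LCD (2 * n) (hatC n a b) \<longleftrightarrow>
              emb a / emb b \<notin>
                {- \<mu> / emb b + 2, - \<mu> / emb b - 2, \<mu> / emb b + 2, \<mu> / emb b - 2}))"
proof -
  have L: "is_LCD (2 * n) (hatC n a b) \<longleftrightarrow>
      emb a / emb b \<notin>
                {- \<mu> / emb b + 2, - \<mu> / emb b - 2, \<mu> / emb b + 2, \<mu> / emb b - 2}
                \<union> {- \<mu> / emb b + \<theta> ^ i + inverse (\<theta> ^ i) | i. 1 \<le> i \<and> i \<le> m}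
                \<union> {\<mu> / emb b + \<theta> ^ i + inverse (\<theta> ^ i) | i. 1 \<le> i \<and> i \<le> m}"
    by (rule main_iff[OF p_prime p_odd char b_nz n_ge m_def r_pos emb mu theta])
  show ?thesis using L by auto
qed

end
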